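(* Let $\gamma$ be a generator of $\mathbb{F}_q^*$. Let $Q(x,y_0,\dots,y_{s-1})=A(x)+\sum_{i=0}^{s-1}A_i(x)y_i$ with $A,A_0,\dots,A_{s-1}\in\mathbb{F}_q[x]$, not all $A_i$ zero. Then the set of all $f\in\mathbb{F}_q[x]$ of degree less than $q-1$ such that $Q\bigl(x,f(x),f(\gamma x),\dots,f(\gamma^{s-1}x)\bigr)=0$ is either empty or an $\mathbb{F}_q$-affine subspace of $\mathbb{F}_q[x]$ of dimension at most $s-1$. *)

theory Defs
  imports "HOL-Computational_Algebra.Polynomial"
begin

lemma vector_space_smult: "vector_space (smult :: 'a::field \<Rightarrow> 'a poly \<Rightarrow> 'a poly)"
  by unfold_locales (auto simp: smult_add_right smult_add_left)

definition poly_affine_subspace_dim_le :: "'a::field poly set \<Rightarrow> nat \<Rightarrow> bool" where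
  "poly_affine_subspace_dim_le S d \<longleftrightarrow>
     (\<exists>f0 V. module.subspace smult V \<and> vector_space.dim smult V \<le> d \<and>
            S = (\<lambda>v. f0 + v) ` V)"

end

theory Submission
  imports Defs
begin

lemma sum_single_at:
  fixes f :: "nat \<Rightarrow> 'b::comm_monoid_add"
  assumes "d \<le> n" "\<And>k. k \<le> n \<Longrightarrow> k \<noteq> d \<Longrightarrow> f k = 0"
  shows "(\<Sum>k\<le>n. f k) = f d"
proof -
  have "(\<Sum>k\<le>n. f k) = f d + (\<Sum>k\<in>{..n} - {d}. f k)"
    using assms(1) by (subst sum.remove[of _ d]) auto
  also have "(\<Sum>k\<in>{..n} - {d}. f k) = 0"
    using assms(2) by (intro sum.neutral) auto
  finally show ?thesis by simp
qed

lemma kernel_coeff: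
  fixes As :: "nat \<Rightarrow> 'a::field poly" and c :: 'a
  assumes d: "\<forall>i<s. \<forall>k<d. coeff (As i) k = 0"
    and Lg: "(\<Sum>i<s. As i * pcompose g [:0, c^i:]) = 0"
    and r: "\<forall>j<r. coeff g j = 0"
  shows "coeff g r * (\<Sum>i<s. coeff (As i) d * (c^r)^i) = 0"
proof -
  have "0 = coeff (\<Sum>i<s. As i * pcompose g [:0, c^i:]) (d+r)" using Lg by simp
  also have "\<dots> = (\<Sum>i<s. coeff (As i * pcompose g [:0, c^i:]) (d+r))"
    by (simp add: coeff_sum)
  also have "\<dots> = (\<Sum>i<s. coeff (As i) d * ((c^i)^r * coeff g r))"
  proof (rule sum.cong[OF refl])
    fix i assume i: "i \<in> {..<s}"
    have "coeff (As i * pcompose g [:0, c^i:]) (d+r)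
        = (\<Sum>k\<le>d+r. coeff (As i) k * ((c^i)^(d+r-k) * coeff g (d+r-k)))"
      by (simp add: coeff_mult coeff_pcompose_linear)
    also have "\<dots> = coeff (As i) d * ((c^i)^(d+r-d) * coeff g (d+r-d))"
    proof (rule sum_single_at)
      fix k assume k: "k \<le> d+r" "k \<noteq> d"
      show "coeff (As i) k * ((c^i)^(d+r-k) * coeff g (d+r-k)) = 0"
      proof (cases "k < d")
        case True then show ?thesis using d i by auto
      next
        case False then have "d+r-k < r" using k by auto
        then show ?thesis using r by auto
      qed
    qed simp
    finally show "coeff (As i * pcompose g [:0, c^i:]) (d+r) = coeff (As i) d * ((c^i)^r * coeff g r)"
      by simp
  qed
  also have "\<dots> = coeff g r * (\<Sum>i<s. coeff (As i) d * (c^r)^i)"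
    by (simp add: sum_distrib_left algebra_simps power_mult[symmetric] mult.commute)
  finally show ?thesis by simp
qed

lemma gen_inj:
  fixes \<gamma> :: "'a::{finite, field}"
  assumes gen: "\<forall>y::'a. y \<noteq> 0 \<longrightarrow> (\<exists>k::nat. y = \<gamma> ^ k)"
  shows "inj_on (\<lambda>r. \<gamma>^r) {..<card (UNIV::'a set) - 1}"
proof -
  have cardnz: "card {y::'a. y \<noteq> 0} = card (UNIV::'a set) - 1"
  proof -
    have "{y::'a. y \<noteq> 0} = UNIV - {0}" by auto
    then show ?thesis by (simp add: card_Diff_singleton)
  qed
  show ?thesis
  proof (rule ccontr)
    assume "\<not> ?thesis"
    then obtain a b where ab: "a < b" "b < card (UNIV::'a set) - 1" "\<gamma>^a = \<gamma>^b"
      unfolding inj_on_def by (metis lessThan_iff linorder_neqE_nat)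
    show False
    proof (cases "\<gamma> = 0")
      case True
      have "{y::'a. y \<noteq> 0} \<subseteq> {1}"
      proof
        fix y :: 'a assume "y \<in> {y. y \<noteq> 0}"
        then obtain k where "y \<noteq> 0" "y = \<gamma>^k" using gen by auto
        then show "y \<in> {1}" using True by (cases k) auto
      qed
      then have "card {y::'a. y \<noteq> 0} \<le> card {1::'a}" by (intro card_mono) auto
      then show False using ab cardnz by simp
    next
      case False
      define m where "m = b - a"
      have m: "0 < m" "m < card (UNIV::'a set) - 1" using ab by (auto simp: m_def)
      have "\<gamma>^a * \<gamma>^m = \<gamma>^(a+m)" by (simp add: power_add)
      also have "a + m = b" using ab by (simp add: m_def)
      finally have "\<gamma>^a * \<gamma>^m = \<gamma>^a * 1" using ab by simp
      then have gm: "\<gamma>^m = 1" using False by simp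
      have pw: "\<gamma>^k = \<gamma>^(k mod m)" for k
      proof -
        have "\<gamma>^k = \<gamma>^(m * (k div m) + k mod m)" by simp
        also have "\<dots> = (\<gamma>^m)^(k div m) * \<gamma>^(k mod m)" by (simp only: power_add power_mult)
        finally show ?thesis using gm by simp
      qed
      have "{y::'a. y \<noteq> 0} \<subseteq> (\<lambda>k. \<gamma>^k) ` {..<m}"
      proof
        fix y :: 'a assume "y \<in> {y. y \<noteq> 0}"
        then obtain k where "y = \<gamma>^k" using gen by auto
        then have "y = \<gamma>^(k mod m)" using pw by simp
        moreover have "k mod m < m" using m by simp
        ultimately show "y \<in> (\<lambda>k. \<gamma>^k) ` {..<m}" by auto
      qed
      then have "card {y::'a. y \<noteq> 0} \<le> card ((\<lambda>k. \<gamma>^k) ` {..<m})" by (intro card_mono) auto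
      also have "\<dots> \<le> m" using card_image_le[of "{..<m}" "\<lambda>k. \<gamma>^k"] by simp
      finally show False using m cardnz by linarith
    qed
  qed
qed

theorem lemmaE8:
  fixes \<gamma> :: "'a::{finite, field}"
    and A :: "'a poly" and As :: "nat \<Rightarrow> 'a poly" and s :: nat
  assumes gen: "\<forall>y::'a. y \<noteq> 0 \<longrightarrow> (\<exists>k::nat. y = \<gamma> ^ k)"
    and nz: "\<exists>i<s. As i \<noteq> 0"
  shows "let S = {f :: 'a poly. degree f < card (UNIV :: 'a set) - 1 \<and>
                    A + (\<Sum>i<s. As i * pcompose f [:0, \<gamma> ^ i:]) = 0}
         in S = {} \<or> poly_affine_subspace_dim_le S (s - 1)"
proof -
  interpret vs: vector_space "smult :: 'a \<Rightarrow> 'a poly \<Rightarrow> 'a poly" by (rule vector_space_smult)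
  define q where "q = card (UNIV :: 'a set)"
  define L where "L g = (\<Sum>i<s. As i * pcompose g [:0, \<gamma> ^ i:])" for g
  have Ladd: "L (g + h) = L g + L h" for g h
    by (simp add: L_def pcompose_add distrib_left sum.distrib)
  have Lsmult: "L (smult a g) = smult a (L g)" for a g
    by (simp add: L_def pcompose_smult vs.scale_sum_right)
  have Ldiff: "L (g - h) = L g - L h" for g h
    by (simp add: L_def pcompose_diff right_diff_distrib sum_subtractf)
  have L0: "L 0 = 0" by (simp add: L_def)
  obtain i0 where i0: "i0 < s" "As i0 \<noteq> 0" using nz by auto
  define Pd where "Pd d \<longleftrightarrow> (\<exists>i<s. coeff (As i) d \<noteq> 0)" for d
  have "Pd (degree (As i0))" using i0 by (auto simp: Pd_def)
  define d where "d = (LEAST d. Pd d)"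
  have Pdd: "Pd d" unfolding d_def by (rule LeastI) fact
  have below: "\<forall>i<s. \<forall>k<d. coeff (As i) k = 0"
  proof (intro allI impI)
    fix i k assume ik: "i < s" "k < d"
    have "\<not> Pd k" using ik(2) unfolding d_def by (rule not_less_Least)
    then show "coeff (As i) k = 0" using ik(1) by (auto simp: Pd_def)
  qed
  define Bp where "Bp = (\<Sum>i<s. monom (coeff (As i) d) i)"
  have coeffB: "coeff Bp j = (if j < s then coeff (As j) d else 0)" for j
    by (simp add: Bp_def coeff_sum coeff_monom)
  have Bnz: "Bp \<noteq> 0"
  proof
    assume B0: "Bp = 0"
    obtain i where i: "i < s" "coeff (As i) d \<noteq> 0" using Pdd unfolding Pd_def by blast
    have "coeff Bp i = coeff (As i) d" using i(1) by (simp add: coeffB)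
    then show False using B0 i(2) by simp
  qed
  have degB: "degree Bp \<le> s - 1"
    by (rule degree_le) (auto simp: coeffB)
  have polyB: "poly Bp x = (\<Sum>i<s. coeff (As i) d * x^i)" for x
    by (simp add: Bp_def poly_sum poly_monom)
  define R where "R = {r. r < q - 1 \<and> poly Bp (\<gamma>^r) = 0}"
  have finR: "finite R" by (simp add: R_def)
  have cardR: "card R \<le> s - 1"
  proof -
    have "card R \<le> card {x. poly Bp x = 0}"
    proof (rule card_inj_on_le[where f = "\<lambda>r. \<gamma>^r"])
      show "inj_on (\<lambda>r. \<gamma>^r) R"
        using gen_inj[OF gen] by (rule inj_on_subset) (auto simp: R_def q_def)
      show "(\<lambda>r. \<gamma>^r) ` R \<subseteq> {x. poly Bp x = 0}" by (auto simp: R_def)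
      show "finite {x. poly Bp x = 0}" using Bnz by (rule poly_roots_finite)
    qed
    also have "\<dots> \<le> degree Bp" using Bnz by (rule card_poly_roots_bound)
    finally show ?thesis using degB by simp
  qed
  define V where "V = {g. degree g < q - 1 \<and> L g = 0}"
  have q2: "2 \<le> q"
  proof -
    have "{0::'a, 1} \<subseteq> UNIV" by simp
    then have "card {0::'a, 1} \<le> q" unfolding q_def by (intro card_mono) auto
    then show ?thesis by simp
  qed
  have subV: "vs.subspace V"
    unfolding vs.subspace_def V_def
  proof (intro conjI ballI allI)
    show "0 \<in> {g. degree g < q - 1 \<and> L g = 0}" using q2 L0 by simp
  next
    fix x y assume "x \<in> {g. degree g < q - 1 \<and> L g = 0}" "y \<in> {g. degree g < q - 1 \<and> L g = 0}"
    then show "x + y \<in> {g. degree g < q - 1 \<and> L g = 0}"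
      using degree_add_le_max[of x y] by (auto simp: Ladd)
  next
    fix c x assume "x \<in> {g. degree g < q - 1 \<and> L g = 0}"
    then show "smult c x \<in> {g. degree g < q - 1 \<and> L g = 0}"
      by (auto simp: Lsmult)
  qed
  have key: "g = 0" if g: "g \<in> V" "\<forall>r\<in>R. coeff g r = 0" for g
  proof -
    have "coeff g r = 0" for r
    proof (induction r rule: less_induct)
      case (less r)
      show ?case
      proof (cases "r < q - 1")
        case False then show ?thesis using g by (auto simp: V_def coeff_eq_0)
      next
        case True
        show ?thesis
        proof (cases "r \<in> R")
          case True then show ?thesis using g by auto
        next
          case False
          have "coeff g r * (\<Sum>i<s. coeff (As i) d * (\<gamma>^r)^i) = 0"
            by (rule kernel_coeff[OF below]) (use g less in \<open>auto simp: V_def L_def\<close>)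
          moreover have "poly Bp (\<gamma>^r) \<noteq> 0" using False True by (auto simp: R_def)
          ultimately show ?thesis by (simp add: polyB)
        qed
      qed
    qed
    then show ?thesis by (simp add: poly_eq_iff)
  qed
  define P where "P g = (\<Sum>r\<in>R. monom (coeff g r) r)" for g :: "'a poly"
  interpret lin: Vector_Spaces.linear "smult :: 'a \<Rightarrow> 'a poly \<Rightarrow> 'a poly" smult P
  proof unfold_locales
    show "P (b1 + b2) = P b1 + P b2" for b1 b2
      by (simp add: P_def add_monom[symmetric] sum.distrib)
    show "P (smult r b) = smult r (P b)" for r b
      by (simp add: P_def vs.scale_sum_right smult_monom)
  qed
  have coeffP: "coeff (P g) r = coeff g r" if "r \<in> R" for g r
    using that finR by (simp add: P_def coeff_sum coeff_monom)
  have injP: "inj_on P V"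
  proof (rule inj_onI)
    fix g h assume gh: "g \<in> V" "h \<in> V" "P g = P h"
    have "g - h \<in> V" by (rule vs.subspace_diff[OF subV gh(1) gh(2)])
    moreover have "\<forall>r\<in>R. coeff (g - h) r = 0" 
    proof
      fix r assume r: "r \<in> R"
      show "coeff (g - h) r = 0" using gh(3) coeffP[OF r, of g] coeffP[OF r, of h] by simp
    qed
    ultimately have "g - h = 0" by (rule key)
    then show "g = h" by simp
  qed
  have dimV: "vs.dim V \<le> s - 1"
  proof -
    obtain B where B: "B \<subseteq> V" "vs.independent B" "V \<subseteq> vs.span B" "card B = vs.dim V"
      using vs.basis_exists by blast
    have spB: "vs.span B \<subseteq> V" using B(1) subV by (rule vs.span_minimal)
    have indep: "vs.independent (P ` B)"
      by (rule lin.independent_injective_image[OF B(2)]) (rule inj_on_subset[OF injP spB])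
    have "P ` B \<subseteq> vs.span ((\<lambda>r. monom 1 r) ` R)"
    proof
      fix x assume "x \<in> P ` B"
      then obtain g where "x = P g" by auto
      then have "x = (\<Sum>r\<in>R. smult (coeff g r) (monom 1 r))"
        by (simp add: P_def smult_monom)
      also have "\<dots> \<in> vs.span ((\<lambda>r. monom 1 r) ` R)"
        by (intro vs.span_sum vs.span_scale vs.span_base) auto
      finally show "x \<in> vs.span ((\<lambda>r. monom 1 r) ` R)" .
    qed
    then have "finite (P ` B) \<and> card (P ` B) \<le> card ((\<lambda>r. monom (1::'a) r) ` R)"
      using vs.independent_span_bound[of "(\<lambda>r. monom 1 r) ` R" "P ` B", OF finite_imageI[OF finR] indep] by simp
    then have "card (P ` B) \<le> card ((\<lambda>r. monom (1::'a) r) ` R)" by (rule conjunct2)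
    also have "\<dots> \<le> card R" by (rule card_image_le[OF finR])
    finally have "card (P ` B) \<le> card R" .
    moreover have "card (P ` B) = card B"
      by (rule card_image) (rule inj_on_subset[OF injP B(1)])
    ultimately show ?thesis using B(4) cardR by simp
  qed
  define S where "S = {f :: 'a poly. degree f < card (UNIV :: 'a set) - 1 \<and>
                    A + (\<Sum>i<s. As i * pcompose f [:0, \<gamma> ^ i:]) = 0}"
  have S_alt: "S = {f. degree f < q - 1 \<and> A + L f = 0}"
    by (simp add: S_def q_def L_def)
  have "S = {} \<or> poly_affine_subspace_dim_le S (s - 1)"
  proof (cases "S = {}")
    case False
    then obtain f0 where f0: "f0 \<in> S" by auto
    have "S = (\<lambda>v. f0 + v) ` V"
    proof
      show "S \<subseteq> (\<lambda>v. f0 + v) ` V"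
      proof
        fix f assume f: "f \<in> S"
        have "L f = - A" "L f0 = - A" using f f0 by (auto simp: S_alt eq_neg_iff_add_eq_0 add.commute)
        then have "L (f - f0) = 0" by (simp add: Ldiff)
        moreover have "degree (f - f0) < q - 1"
          using f f0 degree_diff_le_max[of f f0] by (auto simp: S_alt)
        ultimately have "f - f0 \<in> V" by (simp add: V_def)
        moreover have "f = f0 + (f - f0)" by simp
        ultimately show "f \<in> (\<lambda>v. f0 + v) ` V" by blast
      qed
    next
      show "(\<lambda>v. f0 + v) ` V \<subseteq> S"
      proof
        fix x assume "x \<in> (\<lambda>v. f0 + v) ` V"
        then obtain v where v: "v \<in> V" "x = f0 + v" by auto
        have "degree (f0 + v) \<le> max (degree f0) (degree v)" by (rule degree_add_le_max)
        moreover have "degree f0 < q - 1" "degree v < q - 1" "A + L f0 = 0" "L v = 0"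
          using f0 v by (auto simp: S_alt V_def)
        ultimately show "x \<in> S" using v(2) by (auto simp: S_alt Ladd)
      qed
    qed
    then show ?thesis unfolding poly_affine_subspace_dim_le_def using subV dimV by (intro disjI2 exI[of _ f0] exI[of _ V]) simp
  qed simp
  then show ?thesis unfolding S_def Let_def .
qed

end
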